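(* Let $k\ge 6$ be an even integer. Then for every integer $n\ge 0$, $$p_{S_k}(n)=(-1)^n\sum_{\substack{c\in\mathcal C_{P_k}\\ |c|=n}}(-1)^{\ell(c)}.$$
   Context: A composition is an ordered finite sequence of positive integers (including the empty one); $|c|$ is the sum of parts and $\ell(c)$ the number of parts; $\mathcal C_T$ is the set of compositions all of whose parts lie in $T$. For $k\ge3$, $P_k:=\{\,m((k-2)m\pm(k-4))/2 : m\in\mathbb N\,\}$ (the positive extended $k$-gonal numbers). For $k\ge5$, $S_k:=\{n\in\mathbb N: n\equiv 0,1,-1 \pmod{k-2}\}$. For $S\subseteq\mathbb N$, $p_S(n)$ is the number of partitions of $n$ all of whose parts lie in $S$ (with $p_S(0)=1$). *)

theory Defs
  imports Main "HOL-Library.Multiset"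
begin

definition compositions :: "nat set \<Rightarrow> nat \<Rightarrow> nat list set" where
  "compositions T n = {c. (\<forall>x\<in>set c. x > 0 \<and> x \<in> T) \<and> sum_list c = n}"

definition gonal :: "nat \<Rightarrow> nat set" where
  "gonal k = {n. n > 0 \<and> (\<exists>m::nat. m \<ge> 1 \<and>
      (2 * int n = int m * ((int k - 2) * int m + (int k - 4)) \<or>
       2 * int n = int m * ((int k - 2) * int m - (int k - 4))))}"

definition Sset :: "nat \<Rightarrow> nat set" where
  "Sset k = {n. n > 0 \<and> (n mod (k - 2) = 0 \<or> n mod (k - 2) = 1
                          \<or> (n + 1) mod (k - 2) = 0)}"

definition part_count :: "nat set \<Rightarrow> nat \<Rightarrow> nat" where
  "part_count S n = card {M :: nat multiset. (\<forall>x\<in>#M. x > 0 \<and> x \<in> S) \<and> sum_mset M = n}"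

end

theory Submission
  imports Defs "HOL-Computational_Algebra.Formal_Power_Series"
begin


definition fi :: "int \<Rightarrow> int \<Rightarrow> int" where
  "fi r m = r * (m * (m - 1) div 2) + m"

lemma even_mm1: "even (m * (m - 1 :: int))"
  by auto

lemma fi2: "2 * fi r m = m * (r * m - (r - 2))"
proof -
  have "2 * (m * (m - 1) div 2) = m * (m - 1)" using even_mm1[of m] by simp
  then show ?thesis unfolding fi_def by (simp add: algebra_simps)
qed

lemma fi_ge:
  assumes "r \<ge> 4" shows "fi r m \<ge> \<bar>m\<bar>"
proof (cases "m \<ge> 0")
  case True
  have "m * (m - 1) \<ge> -0" 
  proof (cases "m = 0")
    case False then have "m \<ge> 1" using True by simp
    then show ?thesis by simp
  qed simp
  then have "m * (m - 1) div 2 \<ge> 0" by simp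
  then have "r * (m * (m - 1) div 2) \<ge> 0" using assms by simp
  then show ?thesis using True unfolding fi_def by simp
next
  case False
  define j where "j = - m"
  have j: "j \<ge> 1" using False j_def by simp
  have "2 * fi r m = j * (r * j + r - 2)" unfolding fi2 j_def by (simp add: algebra_simps)
  moreover have "j * (r * j + r - 2) \<ge> j * 4"
  proof -
    have "r * j \<ge> r * 1" using j assms by (intro mult_left_mono) auto
    then have "r * j + r - 2 \<ge> 4" using assms by linarith
    then show ?thesis using j by (intro mult_left_mono) auto
  qed
  ultimately have "2 * fi r m \<ge> j * 4" by linarith
  then show ?thesis using False j_def j by linarith
qed

lemma fi_inj:
  assumes "r \<ge> 4" "fi r m = fi r m'" shows "m = m'"
proof (rule ccontr)
  assume ne: "m \<noteq> m'"
  have "2 * fi r m - 2 * fi r m' = (m - m') * (r * (m + m') - (r - 2))"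
    unfolding fi2 by (simp add: algebra_simps)
  then have "(m - m') * (r * (m + m') - (r - 2)) = 0" using assms by simp
  then have e: "r * (m + m') = r - 2" using ne by simp
  show False
  proof (cases "m + m' \<ge> 1")
    case True then have "r * (m + m') \<ge> r * 1" using assms by (intro mult_left_mono) auto
    then show False using e by simp
  next
    case False then have "r * (m + m') \<le> r * 0" using assms by (intro mult_left_mono) auto
    then show False using e assms by simp
  qed
qed

lemma fi_parity: assumes "even r" shows "even (fi r m) \<longleftrightarrow> even m"
  using assms unfolding fi_def by auto

lemma gonal_fi:
  assumes "k \<ge> 6"
  shows "d \<in> gonal k \<longleftrightarrow> d > 0 \<and> (\<exists>m. m \<noteq> 0 \<and> int d = fi (int k - 2) m)"
proof
  assume "d \<in> gonal k"
  then obtain m :: nat where d: "d > 0" "m \<ge> 1" and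
    h: "2 * int d = int m * ((int k - 2) * int m + (int k - 4)) \<or>
       2 * int d = int m * ((int k - 2) * int m - (int k - 4))"
    unfolding gonal_def by auto
  show "d > 0 \<and> (\<exists>m. m \<noteq> 0 \<and> int d = fi (int k - 2) m)"
  proof (cases "2 * int d = int m * ((int k - 2) * int m + (int k - 4))")
    case True
    have "2 * fi (int k - 2) (- int m) = 2 * int d"
      unfolding fi2 True by (simp add: algebra_simps)
    then show ?thesis using d by (intro conjI exI[of _ "- int m"]) auto
  next
    case False
    then have e: "2 * int d = int m * ((int k - 2) * int m - (int k - 4))" using h by simp
    have "2 * fi (int k - 2) (int m) = 2 * int d"
      unfolding fi2 e by (simp add: algebra_simps)
    then show ?thesis using d by (intro conjI exI[of _ "int m"]) auto
  qed
next
  assume "d > 0 \<and> (\<exists>m. m \<noteq> 0 \<and> int d = fi (int k - 2) m)"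
  then obtain m where d: "d > 0" "m \<noteq> 0" "int d = fi (int k - 2) m" by auto
  show "d \<in> gonal k"
  proof (cases "m > 0")
    case True
    have "2 * int d = int (nat m) * ((int k - 2) * int (nat m) - (int k - 4))"
      using True d(3) fi2[of "int k - 2" m] by (simp add: algebra_simps)
    then show ?thesis unfolding gonal_def using d True by (intro CollectI conjI exI[of _ "nat m"]) auto
  next
    case False
    then have m: "nat (-m) \<ge> 1" "int (nat (-m)) = - m" using d by auto
    have "2 * int d = int (nat (-m)) * ((int k - 2) * int (nat (-m)) + (int k - 4))"
      using d(3) fi2[of "int k - 2" m] m(2) by (simp add: algebra_simps)
    then show ?thesis unfolding gonal_def using d m by (intro CollectI conjI exI[of _ "nat (-m)"]) auto
  qed
qed



lemma compositions_finite: "finite (compositions T n)"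
proof -
  have "compositions T n \<subseteq> {xs. set xs \<subseteq> {1..n} \<and> length xs \<le> n}"
  proof
    fix c assume c: "c \<in> compositions T n"
    then have pos: "\<forall>x\<in>set c. x > 0" and s: "sum_list c = n" unfolding compositions_def by auto
    have "\<forall>x\<in>set c. x \<le> n" using s member_le_sum_list by blast
    moreover have "length c \<le> sum_list c" using pos
      by (induction c) (auto simp: Suc_le_eq)
    ultimately show "c \<in> {xs. set xs \<subseteq> {1..n} \<and> length xs \<le> n}" using pos s by (auto simp: Suc_le_eq)
  qed
  then show ?thesis by (rule finite_subset) (rule finite_lists_length_le, simp)
qed

definition BB :: "nat set \<Rightarrow> nat \<Rightarrow> int" where
  "BB T n = (\<Sum>c\<in>compositions T n. (-1) ^ length c)"

lemma compositions_0: "compositions T 0 = {[]}"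
  unfolding compositions_def
proof (auto simp: sum_list_eq_0_iff)
  fix x :: "nat list" assume "\<forall>x\<in>set x. 0 < x \<and> x \<in> T" "\<forall>n\<in>set x. n = 0"
  then show "x = []" by (cases x) auto
qed

lemma BB_0: "BB T 0 = 1" unfolding BB_def compositions_0 by simp

lemma compositions_Suc:
  assumes "n > 0"
  shows "compositions T n = (\<Union>p\<in>{p\<in>{1..n}. p \<in> T}. (Cons p) ` compositions T (n - p))"
proof (intro equalityI subsetI)
  fix c assume c: "c \<in> compositions T n"
  then obtain p c' where pc: "c = p # c'" using assms unfolding compositions_def by (cases c) auto
  then show "c \<in> (\<Union>p\<in>{p\<in>{1..n}. p \<in> T}. (Cons p) ` compositions T (n - p))"
    using c unfolding compositions_def by (auto simp: Suc_le_eq)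
next
  fix c assume "c \<in> (\<Union>p\<in>{p\<in>{1..n}. p \<in> T}. (Cons p) ` compositions T (n - p))"
  then show "c \<in> compositions T n" unfolding compositions_def by auto
qed

lemma BB_rec:
  assumes "n > 0"
  shows "BB T n = - (\<Sum>p\<in>{p\<in>{1..n}. p \<in> T}. BB T (n - p))"
proof -
  have "BB T n = (\<Sum>p\<in>{p\<in>{1..n}. p \<in> T}. \<Sum>c\<in>(Cons p) ` compositions T (n - p). (-1::int) ^ length c)"
    unfolding BB_def compositions_Suc[OF assms]
    by (rule sum.UNION_disjoint) (auto simp: compositions_finite)
  also have "\<dots> = (\<Sum>p\<in>{p\<in>{1..n}. p \<in> T}. - BB T (n - p))"
  proof (rule sum.cong[OF refl])
    fix p
    have "(\<Sum>c\<in>(Cons p) ` compositions T (n - p). (-1::int) ^ length c)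
        = (\<Sum>c\<in>compositions T (n - p). (-1::int) ^ length (p # c))"
      by (subst sum.reindex) (auto simp: inj_on_def)
    also have "\<dots> = - BB T (n - p)" unfolding BB_def by (simp add: sum_negf)
    finally show "(\<Sum>c\<in>(Cons p) ` compositions T (n - p). (-1::int) ^ length c) = - BB T (n - p)" .
  qed
  finally show ?thesis by (simp add: sum_negf)
qed

definition pset :: "nat set \<Rightarrow> nat \<Rightarrow> nat multiset set" where
  "pset A n = {M. set_mset M \<subseteq> A \<and> sum_mset M = n}"

lemma size_le_sum_mset: "0 \<notin> set_mset M \<Longrightarrow> size M \<le> sum_mset (M :: nat multiset)"
proof (induction M)
  case (add x M) then show ?case by (cases x) auto
qed simp

lemma pset_finite: assumes "finite A" "0 \<notin> A" shows "finite (pset A n)"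
proof -
  have "pset A n \<subseteq> (\<Union>s\<le>n. multisets_of_size A s)"
  proof
    fix M assume "M \<in> pset A n"
    then have "set_mset M \<subseteq> A" "sum_mset M = n" unfolding pset_def by auto
    moreover have "size M \<le> sum_mset M" using assms(2) calculation(1) by (intro size_le_sum_mset) auto
    ultimately show "M \<in> (\<Union>s\<le>n. multisets_of_size A s)" unfolding multisets_of_size_def by auto
  qed
  then show ?thesis by (rule finite_subset) (use assms in auto)
qed

definition PGF :: "nat set \<Rightarrow> int fps" where
  "PGF A = Abs_fps (\<lambda>n. int (card (pset A n)))"

lemma pset_empty: "pset {} n = (if n = 0 then {{#}} else {})"
  unfolding pset_def by auto

lemma mem_le_sum_mset: "x \<in># M \<Longrightarrow> x \<le> sum_mset (M :: nat multiset)"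
proof -
  assume "x \<in># M"
  then obtain M' where "M = add_mset x M'" by (metis multi_member_split)
  then show ?thesis by simp
qed

lemma pset_insert_eq:
  assumes "a \<notin> A" "a \<le> n"
  shows "pset (insert a A) n = pset A n \<union> (\<lambda>M. add_mset a M) ` pset (insert a A) (n - a)"
proof (intro equalityI subsetI)
  fix M assume M: "M \<in> pset (insert a A) n"
  show "M \<in> pset A n \<union> (\<lambda>M. add_mset a M) ` pset (insert a A) (n - a)"
  proof (cases "a \<in># M")
    case True
    then obtain M' where M': "M = add_mset a M'" by (metis multi_member_split)
    then have "M' \<in> pset (insert a A) (n - a)" using M unfolding pset_def by auto
    then show ?thesis using M' by auto
  next
    case False
    then show ?thesis using M unfolding pset_def by auto
  qed
next
  fix M assume "M \<in> pset A n \<union> (\<lambda>M. add_mset a M) ` pset (insert a A) (n - a)"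
  then show "M \<in> pset (insert a A) n" using assms unfolding pset_def by auto
qed

lemma pset_insert_eq2:
  assumes "a \<notin> A" "\<not> a \<le> n"
  shows "pset (insert a A) n = pset A n"
proof (intro equalityI subsetI)
  fix M assume M: "M \<in> pset (insert a A) n"
  then have "a \<notin># M" using assms mem_le_sum_mset unfolding pset_def by fastforce
  then show "M \<in> pset A n" using M unfolding pset_def by auto
qed (auto simp: pset_def)

lemma pset_insert:
  assumes "a \<notin> A" "a > 0" "finite A" "0 \<notin> A"
  shows "card (pset (insert a A) n) = card (pset A n) + (if a \<le> n then card (pset (insert a A) (n - a)) else 0)"
proof (cases "a \<le> n")
  case True
  have fin: "finite (pset A n)" "finite (pset (insert a A) (n - a))"
    using assms pset_finite[of A n] pset_finite[of "insert a A" "n - a"] by auto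
  have disj: "pset A n \<inter> (\<lambda>M. add_mset a M) ` pset (insert a A) (n - a) = {}"
  proof (rule ccontr)
    assume "\<not> ?thesis"
    then obtain M where "add_mset a M \<in> pset A n" by auto
    then show False using assms(1) unfolding pset_def by auto
  qed
  have "card (pset (insert a A) n) = card (pset A n) + card ((\<lambda>M. add_mset a M) ` pset (insert a A) (n - a))"
    unfolding pset_insert_eq[OF assms(1) True] using fin disj by (intro card_Un_disjoint) auto
  also have "card ((\<lambda>M. add_mset a M) ` pset (insert a A) (n - a)) = card (pset (insert a A) (n - a))"
    by (rule card_image) (auto simp: inj_on_def)
  finally show ?thesis using True by simp
qed (use pset_insert_eq2[OF assms(1)] in simp)

lemma PGF_empty: "PGF {} = 1"
  unfolding PGF_def by (rule fps_ext) (simp add: pset_empty)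

lemma X_pow_mult_nth_int: "fps_nth ((fps_X :: int fps) ^ a * F) n = (if a \<le> n then fps_nth F (n - a) else 0)"
  by (simp add: fps_X_power_mult_nth)

lemma PGF_prod:
  assumes "finite A" "0 \<notin> A"
  shows "(\<Prod>s\<in>A. (1 - fps_X ^ s)) * PGF A = 1"
  using assms
proof (induction A rule: finite_induct)
  case empty then show ?case by (simp add: PGF_empty)
next
  case (insert a A)
  have peq: "(1 - fps_X ^ a) * PGF (insert a A) = PGF A"
  proof (rule fps_ext)
    fix n
    show "fps_nth ((1 - fps_X ^ a) * PGF (insert a A)) n = fps_nth (PGF A) n"
    proof -
      have "fps_nth ((1 - fps_X ^ a) * PGF (insert a A)) n = fps_nth (PGF (insert a A)) n - fps_nth (fps_X ^ a * PGF (insert a A)) n"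
        by (simp add: left_diff_distrib)
      also have "\<dots> = fps_nth (PGF A) n"
        unfolding X_pow_mult_nth_int using pset_insert[of a A n] insert by (simp add: PGF_def)
      finally show ?thesis .
    qed
  qed
  have eqp: "(\<Prod>s\<in>insert a A. (1 - fps_X ^ s)) * PGF (insert a A)
      = (\<Prod>s\<in>A. (1 - fps_X ^ s)) * ((1 - fps_X ^ a) * PGF (insert a A))"
    unfolding prod.insert[OF insert(1,2)] by (simp only: ac_simps)
  show ?case unfolding eqp peq using insert by simp
qed



fun qb :: "'a::comm_ring_1 \<Rightarrow> nat \<Rightarrow> nat \<Rightarrow> 'a" where
  "qb Q 0 i = (if i = 0 then 1 else 0)"
| "qb Q (Suc n) 0 = 1"
| "qb Q (Suc n) (Suc i) = qb Q n i + Q ^ (Suc i) * qb Q n (Suc i)"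

lemma qb_zero: "n < i \<Longrightarrow> qb Q n i = 0"
proof (induction n arbitrary: i)
  case 0 then show ?case by simp
next
  case (Suc n) then show ?case by (cases i) auto
qed

lemma qb_0 [simp]: "qb Q n 0 = 1" by (cases n) auto

definition tri :: "nat \<Rightarrow> nat" where "tri i = i * (i - 1) div 2"

lemma tri_Suc: "tri (Suc i) = tri i + i"
proof -
  have "even (i * (i - 1))" by (cases i) auto
  then show ?thesis unfolding tri_def by (cases i) (auto elim!: evenE simp: algebra_simps)
qed

lemma tri_0 [simp]: "tri 0 = 0" by (simp add: tri_def)

lemma cauchy:
  fixes y w Q :: "'a::comm_ring_1"
  shows "(\<Prod>j<n. y + w * Q ^ j) = (\<Sum>i\<le>n. qb Q n i * Q ^ tri i * w ^ i * y ^ (n - i))"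
proof (induction n arbitrary: w)
  case 0 then show ?case by simp
next
  case (Suc n)
  define S where "S = (\<Sum>i\<le>n. qb Q n i * Q ^ tri (Suc i) * w ^ i * y ^ (n - i))"
  have "(\<Prod>j<Suc n. y + w * Q ^ j) = (y + w) * (\<Prod>j<n. y + (w * Q) * Q ^ j)"
    by (subst prod.lessThan_Suc_shift) (simp add: mult.assoc)
  also have "(\<Prod>j<n. y + (w * Q) * Q ^ j) = S"
    unfolding Suc S_def by (intro sum.cong refl) (simp add: tri_Suc power_add power_mult_distrib mult_ac)
  finally have L: "(\<Prod>j<Suc n. y + w * Q ^ j) = w * S + y * S" by (simp add: algebra_simps)
  have wS: "w * S = (\<Sum>i\<le>n. qb Q n i * Q ^ tri (Suc i) * w ^ Suc i * y ^ (n - i))"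
    unfolding S_def sum_distrib_left by (intro sum.cong refl) (simp add: mult_ac)
  have yS: "y * S = y ^ Suc n + (\<Sum>i<n. qb Q n (Suc i) * Q ^ tri (Suc (Suc i)) * w ^ Suc i * y ^ (n - i))"
  proof -
    have "y * S = (\<Sum>i\<le>n. qb Q n i * Q ^ tri (Suc i) * w ^ i * y ^ (Suc n - i))"
      unfolding S_def sum_distrib_left by (intro sum.cong refl) (auto simp: mult_ac Suc_diff_le)
    also have "\<dots> = y ^ Suc n + (\<Sum>i<n. qb Q n (Suc i) * Q ^ tri (Suc (Suc i)) * w ^ Suc i * y ^ (Suc n - Suc i))"
      by (subst sum.atMost_shift) (simp add: tri_def)
    finally show ?thesis by simp
  qed
  have R: "(\<Sum>i\<le>Suc n. qb Q (Suc n) i * Q ^ tri i * w ^ i * y ^ (Suc n - i))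
      = y ^ Suc n + (\<Sum>i\<le>n. qb Q n i * Q ^ tri (Suc i) * w ^ Suc i * y ^ (n - i))
          + (\<Sum>i\<le>n. qb Q n (Suc i) * Q ^ tri (Suc (Suc i)) * w ^ Suc i * y ^ (n - i))"
  proof -
    have "(\<Sum>i\<le>Suc n. qb Q (Suc n) i * Q ^ tri i * w ^ i * y ^ (Suc n - i))
      = y ^ Suc n + (\<Sum>i\<le>n. (qb Q n i + Q ^ Suc i * qb Q n (Suc i)) * Q ^ tri (Suc i) * w ^ Suc i * y ^ (n - i))"
      by (subst sum.atMost_Suc_shift) simp
    also have "(\<Sum>i\<le>n. (qb Q n i + Q ^ Suc i * qb Q n (Suc i)) * Q ^ tri (Suc i) * w ^ Suc i * y ^ (n - i))
      = (\<Sum>i\<le>n. qb Q n i * Q ^ tri (Suc i) * w ^ Suc i * y ^ (n - i))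
          + (\<Sum>i\<le>n. qb Q n (Suc i) * Q ^ tri (Suc (Suc i)) * w ^ Suc i * y ^ (n - i))"
      unfolding sum.distrib[symmetric]
      by (intro sum.cong refl) (simp add: algebra_simps tri_Suc[of "Suc _"] power_add)
    finally show ?thesis by simp
  qed
  have "(\<Sum>i\<le>n. qb Q n (Suc i) * Q ^ tri (Suc (Suc i)) * w ^ Suc i * y ^ (n - i))
      = (\<Sum>i<n. qb Q n (Suc i) * Q ^ tri (Suc (Suc i)) * w ^ Suc i * y ^ (n - i))"
    by (simp add: lessThan_Suc_atMost[symmetric] qb_zero)
  then show ?case unfolding L R wS yS by (simp add: algebra_simps)
qed



definition FF :: "'a::comm_ring_1 \<Rightarrow> nat \<Rightarrow> 'a" where
  "FF Q k = (\<Prod>j<k. 1 - Q ^ Suc j)"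

lemma FF_Suc: "FF Q (Suc k) = FF Q k * (1 - Q ^ Suc k)"
  unfolding FF_def by simp

lemma FF_0 [simp]: "FF Q 0 = 1" unfolding FF_def by simp

lemma qb_prod: "k \<le> n \<Longrightarrow> qb Q n k * FF Q k * FF Q (n - k) = FF Q n"
proof (induction n arbitrary: k)
  case 0 then show ?case by simp
next
  case (Suc n)
  show ?case
  proof (cases k)
    case 0 then show ?thesis by simp
  next
    case (Suc k')
    then have k': "k' \<le> n" using Suc.prems by simp
    have t1: "qb Q n k' * FF Q (Suc k') * FF Q (n - k') = FF Q n * (1 - Q ^ Suc k')"
    proof -
      have "qb Q n k' * FF Q (Suc k') * FF Q (n - k') = (qb Q n k' * FF Q k' * FF Q (n - k')) * (1 - Q ^ Suc k')"
        unfolding FF_Suc by (simp only: ac_simps)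
      then show ?thesis using Suc.IH[OF k'] by simp
    qed
    show ?thesis
    proof (cases "Suc k' \<le> n")
      case True
      then obtain d where d: "n - k' = Suc d" "n - Suc k' = d" by (intro that[of "n - Suc k'"]) auto
      have t2: "qb Q n (Suc k') * FF Q (Suc k') * FF Q (n - k') = FF Q n * (1 - Q ^ (n - k'))"
      proof -
        have "qb Q n (Suc k') * FF Q (Suc k') * FF Q (n - k') = (qb Q n (Suc k') * FF Q (Suc k') * FF Q (n - Suc k')) * (1 - Q ^ (n - k'))"
          unfolding d FF_Suc by (simp only: ac_simps)
        then show ?thesis using Suc.IH[OF True] by simp
      qed
      have "qb Q (Suc n) k * FF Q k * FF Q (Suc n - k)
          = qb Q n k' * FF Q (Suc k') * FF Q (n - k') + Q ^ Suc k' * (qb Q n (Suc k') * FF Q (Suc k') * FF Q (n - k'))"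
        unfolding Suc by (simp add: algebra_simps)
      also have "\<dots> = FF Q n * (1 - Q ^ Suc k') + Q ^ Suc k' * (FF Q n * (1 - Q ^ (n - k')))"
        unfolding t1 t2 ..
      also have "\<dots> = FF Q n * (1 - Q ^ (Suc k' + (n - k')))"
        by (simp add: algebra_simps power_add)
      also have "Suc k' + (n - k') = Suc n" using k' by simp
      finally show ?thesis by (simp add: FF_Suc)
    next
      case False
      then have "k' = n" using k' by simp
      then show ?thesis using t1 Suc by (simp add: qb_zero FF_Suc)
    qed
  qed
qed

definition cng :: "nat \<Rightarrow> int fps \<Rightarrow> int fps \<Rightarrow> bool" where
  "cng t a b \<longleftrightarrow> (\<forall>d<t. fps_nth a d = fps_nth b d)"

lemma cng_refl [simp]: "cng t a a" by (simp add: cng_def)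
lemma cng_sym: "cng t a b \<Longrightarrow> cng t b a" by (simp add: cng_def)
lemma cng_trans: "cng t a b \<Longrightarrow> cng t b c \<Longrightarrow> cng t a c" by (simp add: cng_def)
lemma cng_mono: "cng t a b \<Longrightarrow> t' \<le> t \<Longrightarrow> cng t' a b" by (simp add: cng_def)
lemma cng_add: "cng t a b \<Longrightarrow> cng t c e \<Longrightarrow> cng t (a + c) (b + e)" by (simp add: cng_def)

lemma cng_mult: assumes "cng t a a'" "cng t b b'" shows "cng t (a * b) (a' * b')"
  unfolding cng_def
proof (intro allI impI)
  fix d assume d: "d < t"
  show "fps_nth (a * b) d = fps_nth (a' * b') d"
    unfolding fps_mult_nth using assms d unfolding cng_def by (intro sum.cong refl) auto
qed

lemma cng_sum: "(\<And>i. i \<in> A \<Longrightarrow> cng t (f i) (g i)) \<Longrightarrow> cng t (sum f A) (sum g A)"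
  unfolding cng_def by (simp add: fps_sum_nth)

lemma cng_prod1: "(\<And>i. i \<in> A \<Longrightarrow> cng t (f i) 1) \<Longrightarrow> cng t (prod f A) 1"
proof (induction A rule: infinite_finite_induct)
  case (insert x F)
  then have "cng t (f x * prod f F) (1 * 1)" by (intro cng_mult) auto
  then show ?case using insert by simp
qed auto

lemma cng_Xpow: "cng t a b \<Longrightarrow> cng (e + t) (fps_X ^ e * a) (fps_X ^ e * b)"
  unfolding cng_def by (simp add: X_pow_mult_nth_int)

lemma cng_one_minus: "t \<le> e \<Longrightarrow> cng t (1 - fps_X ^ e) 1"
  unfolding cng_def by (simp add: fps_X_power_nth)

lemma cng_mult1: "cng t b 1 \<Longrightarrow> cng t a (a * b)"
  using cng_sym[OF cng_mult[of t a a b 1]] by simp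

lemma FF_split: "a \<le> b \<Longrightarrow> FF Q b = FF Q a * (\<Prod>j\<in>{a..<b}. 1 - Q ^ Suc j)"
  unfolding FF_def
  by (metis atLeast0LessThan prod.atLeastLessThan_concat zero_le)

lemma FF_nz: "r \<ge> 1 \<Longrightarrow> FF ((fps_X :: int fps) ^ r) k \<noteq> 0"
  unfolding FF_def
proof (subst prod_zero_iff, simp, clarify)
  fix j assume "r \<ge> 1" "1 - (fps_X ^ r) ^ Suc j = (0 :: int fps)"
  then have "fps_nth (1 - (fps_X ^ r) ^ Suc j) 0 = fps_nth (0 :: int fps) 0" by simp
  then show False using \<open>r \<ge> 1\<close> by (simp add: power_mult[symmetric] fps_X_power_nth)
qed

lemma qb_sym:
  assumes "r \<ge> 1" "k \<le> n"
  shows "qb ((fps_X :: int fps) ^ r) n k = qb (fps_X ^ r) n (n - k)"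
proof -
  let ?Q = "(fps_X :: int fps) ^ r"
  have "qb ?Q n k * (FF ?Q k * FF ?Q (n - k)) = qb ?Q n (n - k) * (FF ?Q k * FF ?Q (n - k))"
    using qb_prod[of k n ?Q] qb_prod[of "n - k" n ?Q] assms by (simp add: mult_ac)
  moreover have "FF ?Q k * FF ?Q (n - k) \<noteq> 0" using FF_nz assms by simp
  ultimately show ?thesis by simp
qed

lemma qb_cong_aux:
  assumes r: "r \<ge> 1" and i: "N \<le> i" "i \<le> 2 * N"
  shows "cng (r * (2 * N - i + 1)) (qb ((fps_X :: int fps) ^ r) (2 * N) i * FF (fps_X ^ r) N) 1"
proof -
  let ?Q = "(fps_X :: int fps) ^ r"
  define h where "h = 2 * N - i"
  define Tt where "Tt = (\<Prod>j\<in>{N..<i}. 1 - ?Q ^ Suc j)"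
  define W where "W = (\<Prod>j\<in>{h..<2*N}. 1 - ?Q ^ Suc j)"
  have hN: "h \<le> N" "h \<le> 2 * N" using i h_def by auto
  have "qb ?Q (2 * N) i * FF ?Q i * FF ?Q h = FF ?Q (2 * N)"
    using qb_prod[of i "2 * N" ?Q] i h_def by simp
  then have "FF ?Q h * (qb ?Q (2 * N) i * FF ?Q N * Tt) = FF ?Q h * W"
    using FF_split[of N i ?Q] FF_split[of h "2 * N" ?Q] i hN unfolding Tt_def W_def
    by (simp add: mult_ac)
  then have eq: "qb ?Q (2 * N) i * FF ?Q N * Tt = W" using FF_nz[OF r] by simp
  have cT: "cng (r * (h + 1)) Tt 1" unfolding Tt_def
  proof (rule cng_prod1)
    fix j assume "j \<in> {N..<i}"
    then have "r * (h + 1) \<le> r * Suc j" using hN by (intro mult_left_mono) auto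
    from cng_one_minus[OF this] show "cng (r * (h + 1)) (1 - ?Q ^ Suc j) 1"
      by (simp only: power_mult)
  qed
  have cW: "cng (r * (h + 1)) W 1" unfolding W_def
  proof (rule cng_prod1)
    fix j assume "j \<in> {h..<2*N}"
    then have "r * (h + 1) \<le> r * Suc j" by (intro mult_left_mono) auto
    from cng_one_minus[OF this] show "cng (r * (h + 1)) (1 - ?Q ^ Suc j) 1"
      by (simp only: power_mult)
  qed
  have "cng (r * (h + 1)) (qb ?Q (2 * N) i * FF ?Q N) W"
    using cng_mult1[OF cT, of "qb ?Q (2 * N) i * FF ?Q N"] eq by simp
  then show ?thesis using cW h_def by (auto intro: cng_trans)
qed

lemma qb_cong:
  assumes r: "r \<ge> 1" and i: "i \<le> 2 * N"
  shows "cng (r * (min i (2 * N - i) + 1)) (qb ((fps_X :: int fps) ^ r) (2 * N) i * FF (fps_X ^ r) N) 1"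
proof (cases "N \<le> i")
  case True
  have "min i (2 * N - i) = 2 * N - i" using True i by auto
  then show ?thesis using qb_cong_aux[OF r True i] by simp
next
  case False
  have "qb ((fps_X :: int fps) ^ r) (2 * N) i = qb (fps_X ^ r) (2 * N) (2 * N - i)"
    using qb_sym[OF r i] .
  moreover have "cng (r * (2 * N - (2 * N - i) + 1)) (qb ((fps_X :: int fps) ^ r) (2 * N) (2 * N - i) * FF (fps_X ^ r) N) 1"
    using False by (intro qb_cong_aux[OF r]) auto
  moreover have "min i (2 * N - i) = 2 * N - (2 * N - i)" using False i by auto
  ultimately show ?thesis by simp
qed



definition EE :: "nat \<Rightarrow> nat \<Rightarrow> int fps" where
  "EE r N = (\<Prod>j<N. 1 - fps_X ^ (r * (j + 1) - 1)) * (\<Prod>j<N. 1 - fps_X ^ (r * j + 1))"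

definition gg :: "nat \<Rightarrow> nat \<Rightarrow> nat \<Rightarrow> nat" where
  "gg r N i = nat (fi (int r) (int i - int N))"

lemma sum_lessThan_tri: "(\<Sum>j<N. j) = tri N"
  by (induction N) (auto simp: tri_Suc)

lemma tri2: "2 * int (tri i) = int i * (int i - 1)"
proof -
  have "even (i * (i - 1))" by (cases i) auto
  then have "2 * tri i = i * (i - 1)" unfolding tri_def by simp
  then have "int (2 * tri i) = int (i * (i - 1))" by simp
  then show ?thesis by (cases i) (auto simp: algebra_simps)
qed

lemma twice_cancel: "2 * int a = 2 * int b \<Longrightarrow> a = b" by simp

lemma exp_identity:
  assumes r: "r \<ge> 4" and i: "i \<le> 2 * N"
  shows "i + r * tri i + r * N * (2 * N - i) = (N + r * tri N + r * N * N) + gg r N i"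
proof -
  have fge: "fi (int r) (int i - int N) \<ge> 0" using fi_ge[of "int r" "int i - int N"] r by simp
  have d: "int (2 * N - i) = 2 * int N - int i" using i by simp
  have "int (i + r * tri i + r * N * (2 * N - i)) = int i + int r * int (tri i) + int r * int N * int (2 * N - i)"
    by simp
  then have "2 * int (i + r * tri i + r * N * (2 * N - i)) = 2 * int i + int r * (2 * int (tri i)) + 2 * int r * int N * (2 * int N - int i)"
    unfolding d by (simp add: algebra_simps)
  also have "\<dots> = 2 * int i + int r * (int i * (int i - 1)) + 2 * int r * int N * (2 * int N - int i)"
    unfolding tri2 ..
  also have "\<dots> = 2 * int N + int r * (int N * (int N - 1)) + 2 * int r * int N * int N + 2 * fi (int r) (int i - int N)"
    unfolding fi2 by (simp add: algebra_simps)
  also have "\<dots> = 2 * int (N + r * tri N + r * N * N + gg r N i)"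
  proof -
    have t: "int r * (2 * int (tri N)) = int r * (int N * (int N - 1))" using tri2[of N] by simp
    show ?thesis using fge t unfolding gg_def by (simp add: algebra_simps)
  qed
  finally show ?thesis by (rule twice_cancel)
qed

lemma factor1:
  assumes "j < N" "r \<ge> 1"
  shows "(fps_X :: int fps) ^ (r * N) - fps_X ^ (1 + r * j) = - (fps_X ^ (1 + r * j)) * (1 - fps_X ^ (r * (N - j) - 1))"
proof -
  have "r * (N - j) \<ge> 1" using assms by simp
  then have "1 + r * j + (r * (N - j) - 1) = r * N" using assms by (simp add: diff_mult_distrib2)
  then have "(fps_X :: int fps) ^ (1 + r * j) * fps_X ^ (r * (N - j) - 1) = fps_X ^ (r * N)"
    by (metis power_add)
  then show ?thesis by (simp add: algebra_simps)
qed

lemma jtp: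
  assumes r: "r \<ge> 4"
  shows "EE r N = (\<Sum>i\<le>2*N. (-1) ^ (i + N) * fps_X ^ (gg r N i) * qb ((fps_X :: int fps) ^ r) (2 * N) i)"
proof -
  let ?X = "fps_X :: int fps"
  let ?Q = "?X ^ r"
  define c where "c = N + r * tri N + r * N * N"
  have C: "(\<Prod>j<2*N. ?Q ^ N + (- ?X) * ?Q ^ j) = (\<Sum>i\<le>2*N. qb ?Q (2*N) i * ?Q ^ tri i * (- ?X) ^ i * (?Q ^ N) ^ (2*N - i))"
    by (rule cauchy)
  have split: "{..<2*N} = {..<N} \<union> {N..<2*N}" by auto
  have P1: "(\<Prod>j<N. ?Q ^ N + (- ?X) * ?Q ^ j) = (-1) ^ N * ?X ^ (N + r * tri N) * (\<Prod>j<N. 1 - ?X ^ (r * (j + 1) - 1))"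
  proof -
    have "(\<Prod>j<N. ?Q ^ N + (- ?X) * ?Q ^ j) = (\<Prod>j<N. - (?X ^ (1 + r * j)) * (1 - ?X ^ (r * (N - j) - 1)))"
    proof (intro prod.cong refl)
      fix j assume j: "j \<in> {..<N}"
      have "?Q ^ N = ?X ^ (r*N)" by (simp add: power_mult)
      moreover have "(- ?X) * ?Q ^ j = - (?X ^ (1 + r*j))" by (simp add: power_mult power_add)
      ultimately show "?Q ^ N + (- ?X) * ?Q ^ j = - (?X ^ (1 + r * j)) * (1 - ?X ^ (r * (N - j) - 1))"
        using factor1[of j N r] j r by simp
    qed
    also have "\<dots> = (\<Prod>j<N. - (?X ^ (1 + r * j))) * (\<Prod>j<N. 1 - ?X ^ (r * (N - j) - 1))"
      by (rule prod.distrib)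
    also have "(\<Prod>j<N. 1 - ?X ^ (r * (N - j) - 1)) = (\<Prod>j<N. 1 - ?X ^ (r * (j + 1) - 1))"
      using prod.nat_diff_reindex[of "\<lambda>j. 1 - ?X ^ (r * (j + 1) - 1)" N] by (simp add: Suc_diff_Suc)
    also have "(\<Prod>j<N. - (?X ^ (1 + r * j))) = (-1) ^ N * ?X ^ (\<Sum>j<N. 1 + r * j)"
    proof -
      have "(\<Prod>j<N. - (?X ^ (1 + r * j))) = (\<Prod>j<N. (-1) * ?X ^ (1 + r * j))" by simp
      also have "\<dots> = (-1) ^ N * (\<Prod>j<N. ?X ^ (1 + r * j))" by (subst prod.distrib) simp
      finally show ?thesis by (simp add: power_sum)
    qed
    also have "(\<Sum>j<N. 1 + r * j) = N + r * tri N"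
    proof -
      have "(\<Sum>j<N. 1 + r * j) = (\<Sum>j<N. 1) + (\<Sum>j<N. r * j)" by (rule sum.distrib)
      also have "(\<Sum>j<N. r * j) = r * (\<Sum>j<N. j)" by (rule sum_distrib_left[symmetric])
      finally show ?thesis by (simp add: sum_lessThan_tri)
    qed
    finally show ?thesis .
  qed
  have P2: "(\<Prod>j\<in>{N..<2*N}. ?Q ^ N + (- ?X) * ?Q ^ j) = ?X ^ (r * N * N) * (\<Prod>j<N. 1 - ?X ^ (r * j + 1))"
  proof -
    have "(\<Prod>j\<in>{N..<2*N}. ?Q ^ N + (- ?X) * ?Q ^ j) = (\<Prod>j\<in>{0+N..<N+N}. ?Q ^ N + (- ?X) * ?Q ^ j)"
      by (simp add: mult_2)
    also have "\<dots> = (\<Prod>j\<in>{0..<N}. ?Q ^ N + (- ?X) * ?Q ^ (j + N))"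
      by (rule prod.shift_bounds_nat_ivl)
    also have "\<dots> = (\<Prod>j<N. ?X ^ (r * N) * (1 - ?X ^ (r * j + 1)))"
      by (intro prod.cong) (auto simp: algebra_simps power_add power_mult[symmetric])
    also have "\<dots> = ?X ^ (r * N * N) * (\<Prod>j<N. 1 - ?X ^ (r * j + 1))"
      by (simp add: prod.distrib power_mult)
    finally show ?thesis .
  qed
  have "(\<Prod>j<2*N. ?Q ^ N + (- ?X) * ?Q ^ j) = (\<Prod>j<N. ?Q ^ N + (- ?X) * ?Q ^ j) * (\<Prod>j\<in>{N..<2*N}. ?Q ^ N + (- ?X) * ?Q ^ j)"
    unfolding split by (rule prod.union_disjoint) auto
  also have "\<dots> = (-1) ^ N * ?X ^ c * EE r N"
    unfolding P1 P2 EE_def c_def by (simp add: power_add mult_ac)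
  finally have L: "(\<Prod>j<2*N. ?Q ^ N + (- ?X) * ?Q ^ j) = (-1) ^ N * ?X ^ c * EE r N" .
  have R: "(\<Sum>i\<le>2*N. qb ?Q (2*N) i * ?Q ^ tri i * (- ?X) ^ i * (?Q ^ N) ^ (2*N - i))
      = ?X ^ c * (\<Sum>i\<le>2*N. (-1) ^ i * ?X ^ (gg r N i) * qb ?Q (2 * N) i)"
    unfolding sum_distrib_left
  proof (intro sum.cong refl)
    fix i assume "i \<in> {..2*N}"
    then have e: "i + r * tri i + r * N * (2 * N - i) = c + gg r N i" unfolding c_def
      using exp_identity[OF r] by simp
    have "qb ?Q (2*N) i * ?Q ^ tri i * (- ?X) ^ i * (?Q ^ N) ^ (2*N - i)
        = (-1) ^ i * ?X ^ (i + r * tri i + r * N * (2 * N - i)) * qb ?Q (2 * N) i"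
    proof -
      have a: "?Q ^ tri i = ?X ^ (r * tri i)" by (simp only: power_mult)
      have b: "(?Q ^ N) ^ (2*N - i) = ?X ^ (r * N * (2 * N - i))" by (simp only: power_mult)
      have c: "(- ?X) ^ i = (-1) ^ i * ?X ^ i" by (rule power_minus)
      have d: "?X ^ (i + r * tri i + r * N * (2 * N - i)) = ?X ^ i * ?X ^ (r * tri i) * ?X ^ (r * N * (2 * N - i))"
        by (simp only: power_add)
      show ?thesis unfolding a b c d by (simp only: ac_simps)
    qed
    also have "\<dots> = ?X ^ c * ((-1) ^ i * ?X ^ (gg r N i) * qb ?Q (2 * N) i)"
      unfolding e power_add by (simp only: ac_simps)
    finally show "qb ?Q (2*N) i * ?Q ^ tri i * (- ?X) ^ i * (?Q ^ N) ^ (2*N - i)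
        = ?X ^ c * ((-1) ^ i * ?X ^ (gg r N i) * qb ?Q (2 * N) i)" .
  qed
  have "?X ^ c * ((-1) ^ N * EE r N) = ?X ^ c * (\<Sum>i\<le>2*N. (-1) ^ i * ?X ^ (gg r N i) * qb ?Q (2 * N) i)"
    using C L R by (simp add: mult_ac)
  then have "(-1) ^ N * EE r N = (\<Sum>i\<le>2*N. (-1) ^ i * ?X ^ (gg r N i) * qb ?Q (2 * N) i)"
    by simp
  moreover have "(-1) ^ N * (-1) ^ N = (1 :: int fps)"
    by (simp flip: power_mult_distrib)
  ultimately have "EE r N = (-1) ^ N * (\<Sum>i\<le>2*N. (-1) ^ i * ?X ^ (gg r N i) * qb ?Q (2 * N) i)"
    by (metis mult.assoc mult_1)
  also have "\<dots> = (\<Sum>i\<le>2*N. (-1) ^ (i + N) * ?X ^ (gg r N i) * qb ?Q (2 * N) i)"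
    unfolding sum_distrib_left by (intro sum.cong refl) (simp add: power_add mult_ac)
  finally show ?thesis .
qed



definition DD :: "nat \<Rightarrow> int fps" where
  "DD r = Abs_fps (\<lambda>d. if \<exists>m. int d = fi (int r) m then (-1) ^ d else 0)"

lemma neg1_pow: "(-1 :: int fps) ^ n = fps_const ((-1) ^ n)"
proof -
  have "(-1 :: int fps) = fps_const (-1)" by (simp flip: fps_const_neg)
  then show ?thesis by (simp only: fps_const_power)
qed

lemma gg_ge:
  assumes "r \<ge> 4" shows "int (gg r N i) \<ge> \<bar>int i - int N\<bar>"
proof -
  have a: "\<bar>int i - int N\<bar> \<le> fi (int r) (int i - int N)" using fi_ge[of "int r" "int i - int N"] assms by simp
  then have "0 \<le> fi (int r) (int i - int N)" by linarith
  then show ?thesis using a unfolding gg_def by simp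
qed

lemma term_cong:
  assumes r: "r \<ge> 4" and i: "i \<le> 2 * N"
  shows "cng (N + 1) ((-1) ^ (i + N) * fps_X ^ (gg r N i) * (qb ((fps_X :: int fps) ^ r) (2 * N) i * FF (fps_X ^ r) N))
                    ((-1) ^ (i + N) * fps_X ^ (gg r N i))"
proof -
  define h where "h = min i (2 * N - i)"
  have c1: "cng (r * (h + 1)) (qb ((fps_X :: int fps) ^ r) (2 * N) i * FF (fps_X ^ r) N) 1"
    unfolding h_def by (rule qb_cong) (use r i in auto)
  have c2: "cng (gg r N i + r * (h + 1)) (fps_X ^ (gg r N i) * (qb ((fps_X :: int fps) ^ r) (2 * N) i * FF (fps_X ^ r) N)) (fps_X ^ (gg r N i) * 1)"
    by (rule cng_Xpow[OF c1])
  have hh: "int h = int N - \<bar>int i - int N\<bar>" using i unfolding h_def by (auto simp: min_def)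
  have "int (gg r N i) + int h + 1 \<ge> int N + 1"
    using gg_ge[OF r, where N=N and i=i] hh by linarith
  moreover have "r * (h + 1) \<ge> 1 * (h + 1)" using r by (intro mult_right_mono) auto
  ultimately have le: "N + 1 \<le> gg r N i + r * (h + 1)"
  proof -
    assume a: "int N + 1 \<le> int (gg r N i) + int h + 1" and b: "1 * (h + 1) \<le> r * (h + 1)"
    from a have "N \<le> gg r N i + h" by linarith
    moreover have "gg r N i + (h + 1) \<le> gg r N i + r * (h + 1)" using b by simp
    ultimately show ?thesis by linarith
  qed
  have "cng (N + 1) (fps_X ^ (gg r N i) * (qb ((fps_X :: int fps) ^ r) (2 * N) i * FF (fps_X ^ r) N)) (fps_X ^ (gg r N i))"
    using cng_mono[OF c2 le] by simp
  from cng_mult[OF cng_refl this, of "(-1) ^ (i + N)"] show ?thesis by (simp add: mult.assoc)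
qed

lemma sum_coeff:
  assumes r: "r \<ge> 4" "even r" and d: "d \<le> N"
  shows "fps_nth (\<Sum>i\<le>2*N. (-1) ^ (i + N) * (fps_X :: int fps) ^ (gg r N i)) d = fps_nth (DD r) d"
proof -
  have "fps_nth (\<Sum>i\<le>2*N. (-1) ^ (i + N) * (fps_X :: int fps) ^ (gg r N i)) d
      = (\<Sum>i\<le>2*N. if gg r N i = d then (-1) ^ (i + N) else 0)"
    by (auto simp add: fps_sum_nth neg1_pow fps_X_power_nth intro!: sum.cong)
  also have "\<dots> = fps_nth (DD r) d"
  proof (cases "\<exists>m. int d = fi (int r) m")
    case True
    then obtain m where m: "int d = fi (int r) m" by auto
    have am: "\<bar>m\<bar> \<le> int N" using fi_ge[of "int r" m] r m d by simp
    define i0 where "i0 = nat (int N + m)"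
    have i0: "int i0 = int N + m" "i0 \<le> 2 * N" using am unfolding i0_def by auto
    have iff: "gg r N i = d \<longleftrightarrow> i = i0" for i
    proof
      assume "gg r N i = d"
      then have "fi (int r) (int i - int N) = fi (int r) m"
        using m fi_ge[of "int r" "int i - int N"] r unfolding gg_def by simp
      moreover have "int r \<ge> 4" using r by simp
      ultimately have "int i - int N = m" using fi_inj by blast
      then show "i = i0" using i0 by simp
    next
      assume "i = i0" then show "gg r N i = d" using i0 m unfolding gg_def by simp
    qed
    have "(\<Sum>i\<le>2*N. if gg r N i = d then (-1) ^ (i + N) else (0::int)) = (\<Sum>i\<le>2*N. if i = i0 then (-1) ^ (i + N) else 0)"
      using iff by (intro sum.cong) auto
    also have "\<dots> = (-1) ^ (i0 + N)" using i0 by simp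
    also have "\<dots> = (-1) ^ d"
    proof -
      have "even (i0 + N) \<longleftrightarrow> even d"
      proof -
        have "even (int (i0 + N)) \<longleftrightarrow> even m" using i0 by (simp add: algebra_simps)
        also have "\<dots> \<longleftrightarrow> even (fi (int r) m)" using fi_parity[of "int r" m] r by simp
        also have "\<dots> \<longleftrightarrow> even (int d)" using m by simp
        finally show ?thesis by simp
      qed
      then show ?thesis by (simp add: minus_one_power_iff)
    qed
    finally show ?thesis unfolding DD_def using True by simp
  next
    case False
    have "gg r N i \<noteq> d" for i
    proof
      assume "gg r N i = d"
      then have "int d = fi (int r) (int i - int N)"
        using fi_ge[of "int r" "int i - int N"] r unfolding gg_def by simp
      then show False using False by auto
    qed
    then show ?thesis unfolding DD_def using False by simp
  qed
  finally show ?thesis .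
qed

lemma EE_FF_cong:
  assumes r: "r \<ge> 4" "even r"
  shows "cng (N + 1) (EE r N * FF ((fps_X :: int fps) ^ r) N) (DD r)"
proof -
  have "EE r N * FF ((fps_X :: int fps) ^ r) N
      = (\<Sum>i\<le>2*N. (-1) ^ (i + N) * fps_X ^ (gg r N i) * (qb ((fps_X :: int fps) ^ r) (2 * N) i * FF (fps_X ^ r) N))"
    unfolding jtp[OF r(1)] sum_distrib_right by (simp only: ac_simps)
  moreover have "cng (N + 1) (\<Sum>i\<le>2*N. (-1) ^ (i + N) * fps_X ^ (gg r N i) * (qb ((fps_X :: int fps) ^ r) (2 * N) i * FF (fps_X ^ r) N))
     (\<Sum>i\<le>2*N. (-1) ^ (i + N) * fps_X ^ (gg r N i))"
    by (rule cng_sum) (use term_cong[OF r(1)] in auto)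
  moreover have "cng (N + 1) (\<Sum>i\<le>2*N. (-1) ^ (i + N) * (fps_X :: int fps) ^ (gg r N i)) (DD r)"
    unfolding cng_def using sum_coeff[OF r] by auto
  ultimately show ?thesis by (auto intro: cng_trans)
qed



lemma DD_nth: "fps_nth (DD r) d = (if \<exists>m. int d = fi (int r) m then (-1) ^ d else 0)"
  by (simp add: DD_def)

lemma DD_gonal:
  assumes k: "k \<ge> 6" and d: "d > 0"
  shows "(\<exists>m. int d = fi (int (k - 2)) m) \<longleftrightarrow> d \<in> gonal k"
proof -
  have e: "int (k - 2) = int k - 2" using k by simp
  have "fi (int (k-2)) 0 = 0" by (simp add: fi_def)
  then show ?thesis unfolding gonal_fi[OF k] e using d by (metis of_nat_0_less_iff less_irrefl e)
qed

lemma DV: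
  assumes k: "k \<ge> 6"
  shows "DD (k - 2) * Abs_fps (\<lambda>n. (-1) ^ n * BB (gonal k) n) = 1"
proof (rule fps_ext)
  fix n
  define V where "V = Abs_fps (\<lambda>n. (-1) ^ n * BB (gonal k) n)"
  have D0: "fps_nth (DD (k - 2)) 0 = 1" unfolding DD_nth by (auto intro: exI[of _ 0] simp: fi_def)
  have "fps_nth (DD (k - 2) * V) n = fps_nth 1 n"
  proof (cases "n = 0")
    case True
    then show ?thesis using D0 by (simp add: V_def BB_0)
  next
    case False
    have ins: "{0..n} = insert 0 {1..n}" by auto
    have "fps_nth (DD (k - 2) * V) n = fps_nth V n + (\<Sum>i\<in>{1..n}. fps_nth (DD (k - 2)) i * fps_nth V (n - i))"
      unfolding fps_mult_nth ins using D0 by (simp)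
    also have "(\<Sum>i\<in>{1..n}. fps_nth (DD (k - 2)) i * fps_nth V (n - i))
        = (\<Sum>i\<in>{1..n}. if i \<in> gonal k then (-1) ^ n * BB (gonal k) (n - i) else 0)"
    proof (intro sum.cong refl)
      fix i assume i: "i \<in> {1..n}"
      then have pw: "(-1) ^ i * (-1) ^ (n - i) = ((-1) ^ n :: int)" by (simp flip: power_add)
      show "fps_nth (DD (k - 2)) i * fps_nth V (n - i) = (if i \<in> gonal k then (-1) ^ n * BB (gonal k) (n - i) else 0)"
      proof -
        have g: "(\<exists>m. int i = fi (int (k - 2)) m) \<longleftrightarrow> i \<in> gonal k" using DD_gonal[OF k, of i] i by auto
        show ?thesis unfolding DD_nth g using i pw by (auto simp: V_def mult.assoc[symmetric])
      qed
    qed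
    also have "\<dots> = (\<Sum>i\<in>{p\<in>{1..n}. p \<in> gonal k}. (-1) ^ n * BB (gonal k) (n - i))"
      by (rule sum.inter_filter[symmetric]) simp
    also have "\<dots> = (-1) ^ n * (\<Sum>i\<in>{p\<in>{1..n}. p \<in> gonal k}. BB (gonal k) (n - i))"
      by (simp add: sum_distrib_left)
    finally show ?thesis using BB_rec[of n "gonal k"] False by (simp add: V_def)
  qed
  then show "fps_nth (DD (k - 2) * Abs_fps (\<lambda>n. (-1) ^ n * BB (gonal k) n)) n = fps_nth 1 n"
    unfolding V_def .
qed



lemma A_decomp:
  assumes r: "r \<ge> 4" and rk: "k - 2 = r"
  shows "{s. s \<in> Sset k \<and> s \<le> r * N} =
     (\<lambda>j. r * (j + 1) - 1) ` {..<N} \<union> ((\<lambda>j. r * j + 1) ` {..<N} \<union> (\<lambda>j. r * (j + 1)) ` {..<N})"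
proof (intro equalityI subsetI)
  fix s assume "s \<in> {s. s \<in> Sset k \<and> s \<le> r * N}"
  then have s: "s > 0" "s \<le> r * N" and c: "s mod r = 0 \<or> s mod r = 1 \<or> (s + 1) mod r = 0"
    unfolding Sset_def rk by auto
  have dm: "s = r * (s div r) + s mod r" by simp
  show "s \<in> (\<lambda>j. r * (j + 1) - 1) ` {..<N} \<union> ((\<lambda>j. r * j + 1) ` {..<N} \<union> (\<lambda>j. r * (j + 1)) ` {..<N})"
  proof (cases "s mod r = 0")
    case True
    define q where "q = s div r"
    have sq: "s = r * q" using dm True q_def by simp
    have q1: "q \<ge> 1" using s sq by (cases q) auto
    have "q \<le> N" using s sq r by simp
    then have "s = r * ((q - 1) + 1) \<and> q - 1 < N" using sq q1 by simp
    then show ?thesis by blast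
  next
    case F1: False
    show ?thesis
    proof (cases "s mod r = 1")
      case True
      define q where "q = s div r"
      have sq: "s = r * q + 1" using dm True q_def by simp
      have "q < N"
      proof (rule ccontr)
        assume "\<not> q < N"
        then have "r * N \<le> r * q" by (intro mult_le_mono2) simp
        then show False using s sq by linarith
      qed
      then show ?thesis using sq by blast
    next
      case False
      then have c3: "(s + 1) mod r = 0" using c F1 by simp
      define q where "q = (s + 1) div r"
      have e: "r * ((s + 1) div r) + (s + 1) mod r = s + 1" by (rule mult_div_mod_eq)
      have sq: "s + 1 = r * q" unfolding q_def using e c3 by linarith
      have q1: "q \<ge> 1" using sq by (cases q) auto
      have "q \<le> N"
      proof (rule ccontr)
        assume "\<not> q \<le> N"
        then have "r * (N + 1) \<le> r * q" by (intro mult_le_mono2) simp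
        then have "r * N + r \<le> s + 1" using sq by (simp add: algebra_simps)
        then show False using s r by linarith
      qed
      then have a: "s = r * q - 1" "q - 1 < N" using sq q1 by linarith+
      moreover have "q - 1 + 1 = q" using q1 by simp
      ultimately have "s = r * ((q - 1) + 1) - 1 \<and> q - 1 < N" by simp
      then show ?thesis by blast
    qed
  qed
next
  fix s assume "s \<in> (\<lambda>j. r * (j + 1) - 1) ` {..<N} \<union> ((\<lambda>j. r * j + 1) ` {..<N} \<union> (\<lambda>j. r * (j + 1)) ` {..<N})"
  then obtain j where j: "j < N" and
    cs: "s = r * (j + 1) - 1 \<or> s = r * j + 1 \<or> s = r * (j + 1)" by auto
  have le: "r * (j + 1) \<le> r * N" using j by (intro mult_le_mono2) simp
  have r1: "r * (j + 1) \<ge> 4" using r by (simp add: algebra_simps)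
  show "s \<in> {s. s \<in> Sset k \<and> s \<le> r * N}"
  proof (cases "s = r * (j + 1) - 1")
    case True
    have "s + 1 = r * (j + 1)" using True r1 by simp
    then show ?thesis using True le r1 unfolding Sset_def rk by simp
  next
    case F1: False
    show ?thesis
    proof (cases "s = r * j + 1")
      case True
      have "(1 + j * r) mod r = 1 mod r" by (rule mod_mult_self1)
      moreover have "(1::nat) mod r = 1" using r by (intro mod_less) simp
      ultimately have "(r * j + 1) mod r = 1" by (simp only: ac_simps)
      moreover have "r * j + 1 \<le> r * N" using le r by (simp add: algebra_simps)
      ultimately show ?thesis using True unfolding Sset_def rk by simp
    next
      case False
      then have "s = r * (j + 1)" using cs F1 by simp
      then show ?thesis using le r1 r unfolding Sset_def rk by simp
    qed
  qed
qed

lemma dvd_small: "(r::nat) \<ge> 3 \<Longrightarrow> r dvd c \<Longrightarrow> c \<le> 2 \<Longrightarrow> c = 0"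
proof (rule ccontr)
  assume "r \<ge> 3" "r dvd c" "c \<le> 2" "c \<noteq> 0"
  then have "r \<le> c" by (intro dvd_imp_le) auto
  then show False using \<open>r \<ge> 3\<close> \<open>c \<le> 2\<close> by simp
qed

lemma prodA:
  assumes r: "r \<ge> 4" and rk: "k - 2 = r"
  shows "(\<Prod>s\<in>{s. s \<in> Sset k \<and> s \<le> r * N}. 1 - (fps_X :: int fps) ^ s) = EE r N * FF (fps_X ^ r) N"
proof -
  let ?f = "\<lambda>s. 1 - (fps_X :: int fps) ^ s"
  let ?I1 = "(\<lambda>j. r * (j + 1) - 1) ` {..<N}"
  let ?I2 = "(\<lambda>j. r * j + 1) ` {..<N}"
  let ?I3 = "(\<lambda>j. r * (j + 1)) ` {..<N}"
  have r3: "r \<ge> 3" using r by simp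
  have pos: "r * (j + 1) \<ge> 1" for j using r by simp
  have d12: "?I1 \<inter> (?I2 \<union> ?I3) = {}"
  proof (rule ccontr)
    assume "?I1 \<inter> (?I2 \<union> ?I3) \<noteq> {}"
    then obtain j j' where "r * (j + 1) - 1 = r * j' + 1 \<or> r * (j + 1) - 1 = r * (j' + 1)" by blast
    then show False
    proof
      assume "r * (j + 1) - 1 = r * j' + 1"
      then have e: "r * (j + 1) = r * j' + 2" using pos[of j] by linarith
      then have "r dvd r * j' + 2" by (metis dvd_triv_left)
      then have "r dvd 2" using dvd_add_right_iff[OF dvd_triv_left[of r j'], of 2] by blast
      then show False using dvd_small[OF r3, of 2] by simp
    next
      assume "r * (j + 1) - 1 = r * (j' + 1)"
      then have e: "r * (j + 1) = r * (j' + 1) + 1" using pos[of j] by linarith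
      then have "r dvd r * (j' + 1) + 1" by (metis dvd_triv_left)
      then have "r dvd 1" using dvd_add_right_iff[OF dvd_triv_left[of r "j' + 1"], of 1] by blast
      then show False using r by simp
    qed
  qed
  have d23: "?I2 \<inter> ?I3 = {}"
  proof (rule ccontr)
    assume "?I2 \<inter> ?I3 \<noteq> {}"
    then obtain j j' where e: "r * j + 1 = r * (j' + 1)" by blast
    then have "r dvd r * j + 1" by (metis dvd_triv_left)
    then have "r dvd 1" using dvd_add_right_iff[OF dvd_triv_left[of r j], of 1] by blast
    then show False using r by simp
  qed
  have i1: "inj_on (\<lambda>j. r * (j + 1) - 1) {..<N}"
  proof (rule inj_onI)
    fix a b assume "r * (a + 1) - 1 = r * (b + 1) - 1"
    then have "r * (a + 1) = r * (b + 1)" using pos[of a] pos[of b] by linarith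
    then show "a = b" using r by simp
  qed
  have i2: "inj_on (\<lambda>j. r * j + 1) {..<N}" using r by (auto simp: inj_on_def)
  have i3: "inj_on (\<lambda>j. r * (j + 1)) {..<N}" using r by (auto simp: inj_on_def)
  have "(\<Prod>s\<in>{s. s \<in> Sset k \<and> s \<le> r * N}. ?f s) = prod ?f ?I1 * (prod ?f ?I2 * prod ?f ?I3)"
    unfolding A_decomp[OF r rk]
    by (subst prod.union_disjoint, simp, simp, fact d12, subst prod.union_disjoint, simp, simp, fact d23, rule refl)
  also have "prod ?f ?I1 = (\<Prod>j<N. 1 - fps_X ^ (r * (j + 1) - 1))"
    by (subst prod.reindex[OF i1]) simp
  also have "prod ?f ?I2 = (\<Prod>j<N. 1 - fps_X ^ (r * j + 1))"
    by (subst prod.reindex[OF i2]) simp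
  also have "prod ?f ?I3 = FF (fps_X ^ r) N"
    unfolding FF_def by (subst prod.reindex[OF i3]) (simp only: comp_def power_mult Suc_eq_plus1)
  finally show ?thesis unfolding EE_def by (simp only: ac_simps)
qed

lemma DU:
  assumes r: "r \<ge> 4" "even r" and rk: "k - 2 = r"
  shows "DD r * Abs_fps (\<lambda>n. int (part_count (Sset k) n)) = 1"
proof (rule fps_ext)
  fix n
  define U where "U = Abs_fps (\<lambda>n. int (part_count (Sset k) n))"
  define N :: nat where "N = n"
  define A where "A = {s. s \<in> Sset k \<and> s \<le> r * N}"
  have finA: "finite A" unfolding A_def by (rule finite_subset[of _ "{..r * N}"]) auto
  have A0: "0 \<notin> A" unfolding A_def Sset_def by simp
  have P: "EE r N * FF (fps_X ^ r) N * PGF A = 1"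
    using PGF_prod[OF finA A0] prodA[OF r(1) rk, of N] unfolding A_def by simp
  have NrN: "N \<le> r * N" using r by simp
  have cU: "cng (N + 1) U (PGF A)"
    unfolding cng_def
  proof (intro allI impI)
    fix d assume "d < N + 1"
    then have d: "d \<le> r * N" using NrN by linarith
    have "{M :: nat multiset. (\<forall>x\<in>#M. x > 0 \<and> x \<in> Sset k) \<and> sum_mset M = d} = pset A d"
    proof (intro equalityI subsetI)
      fix M assume M: "M \<in> {M :: nat multiset. (\<forall>x\<in>#M. x > 0 \<and> x \<in> Sset k) \<and> sum_mset M = d}"
      have "\<forall>x\<in>#M. x \<le> r * N" using M d mem_le_sum_mset by fastforce
      then show "M \<in> pset A d" using M unfolding pset_def A_def by auto
    next
      fix M assume "M \<in> pset A d"
      then show "M \<in> {M :: nat multiset. (\<forall>x\<in>#M. x > 0 \<and> x \<in> Sset k) \<and> sum_mset M = d}"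
        unfolding pset_def A_def Sset_def by auto
    qed
    then show "fps_nth U d = fps_nth (PGF A) d" unfolding U_def PGF_def part_count_def by simp
  qed
  have "cng (N + 1) (DD r * U) (EE r N * FF (fps_X ^ r) N * PGF A)"
    by (rule cng_mult[OF cng_sym[OF EE_FF_cong[OF r]] cU])
  then have "cng (N + 1) (DD r * U) 1" unfolding P .
  then have "fps_nth (DD r * U) n = fps_nth 1 n" unfolding cng_def N_def by simp
  then show "fps_nth (DD r * Abs_fps (\<lambda>n. int (part_count (Sset k) n))) n = fps_nth 1 n"
    unfolding U_def .
qed

theorem theorem1:
  fixes k n :: nat
  assumes "k \<ge> 6" and "even k"
  shows "int (part_count (Sset k) n) =
         (-1) ^ n * (\<Sum>c\<in>compositions (gonal k) n. (-1 :: int) ^ length c)"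
proof -
  define r where "r = k - 2"
  have r: "r \<ge> 4" "even r" using assms unfolding r_def by auto
  let ?U = "Abs_fps (\<lambda>n. int (part_count (Sset k) n))"
  let ?V = "Abs_fps (\<lambda>n. (-1) ^ n * BB (gonal k) n)"
  have "DD r * ?U = DD r * ?V"
    using DU[OF r r_def[symmetric]] DV[OF assms(1)] unfolding r_def by simp
  moreover have "DD r \<noteq> 0"
  proof
    assume "DD r = 0"
    then have "fps_nth (DD r) 0 = 0" by simp
    moreover have "\<exists>m. int 0 = fi (int r) m" by (rule exI[of _ 0]) (simp add: fi_def)
    ultimately show False unfolding DD_nth by simp
  qed
  ultimately have "?U = ?V" by simp
  then have "fps_nth ?U n = fps_nth ?V n" by simp
  then show ?thesis unfolding BB_def by simp
qed


end
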